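(* Let $S=\{h_{\bm s}: \bm s\in\{\pm e_i,\ \pm e_j\pm e_k \mid 1\le i\le N,\ 1\le j<k\le N\}\}\subset\mathcal{H}_N$, let $\langle S\rangle$ be the Lie subalgebra of $\mathcal{H}_N$ generated by $S$, and let $L_S=\{\bm r\in\mathbb{Z}^N : h_{\bm r}\in\langle S\rangle\}$. Then $L_S=\mathbb{Z}^N$.
   Context: $\mathbb{K}$ is an algebraically closed field of characteristic zero, $N=2m\ge2$ even, $e_1,\dots,e_N$ the standard basis of $\mathbb{Z}^N\subset\mathbb{K}^N$, $(\cdot,\cdot)$ the bilinear form with $(e_i,e_j)=\delta_{ij}$. Let $A_N=\mathbb{K}[t_1^{\pm1},\dots,t_N^{\pm1}]$, $d_i=t_i\frac{\partial}{\partial t_i}$, $t^{\bm r}=t_1^{r_1}\cdots t_N^{r_N}$, $D(u,\bm r)=\sum_i u_it^{\bm r}d_i$. Let $\bm J=\begin{pmatrix} O_m & I_m\\ -I_m & O_m\end{pmatrix}$, $\overline{\bm r}=\bm J\bm r$, $h_{\bm r}=D(\overline{\bm r},\bm r)$ (so $h_{\bm 0}=0$). The Hamiltonian Lie algebra is $\mathcal{H}_N=\operatorname{span}_{\mathbb{K}}\{h_{\bm r}:\bm r\ne\bm0\}\oplus\operatorname{span}_{\mathbb{K}}\{d_1,\dots,d_N\}$ with commutator bracket; $[h_{\bm r},h_{\bm s}]=(\overline{\bm r},\bm s)h_{\bm r+\bm s}$. *)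

theory Defs
  imports "HOL-Computational_Algebra.Polynomial"
begin

text \<open>Lattice vectors in Z^N are modelled as functions nat => int vanishing outside
  the index range {0..<N} (indices are 0-based: e_i with i < N).\<close>

definition zvec :: "nat \<Rightarrow> (nat \<Rightarrow> int) \<Rightarrow> bool" where
  "zvec N r \<longleftrightarrow> (\<forall>i\<ge>N. r i = 0)"

definition evec :: "nat \<Rightarrow> nat \<Rightarrow> int" where
  "evec i = (\<lambda>j. if j = i then 1 else 0)"

text \<open>bar r = J r with J = ((O, I), (-I, O)) of size N = 2m.\<close>
definition Jbar :: "nat \<Rightarrow> (nat \<Rightarrow> int) \<Rightarrow> (nat \<Rightarrow> int)" where
  "Jbar m r = (\<lambda>i. if i < m then r (i + m) else if i < 2*m then - r (i - m) else 0)"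

definition ip :: "nat \<Rightarrow> (nat \<Rightarrow> int) \<Rightarrow> (nat \<Rightarrow> int) \<Rightarrow> int" where
  "ip N r s = (\<Sum>i<N. r i * s i)"

text \<open>Elements of the Hamiltonian Lie algebra H_N, N = 2m: a pair (f, u) standing for
  sum_{r \<noteq> 0} f(r) h_r + sum_i u(i) d_i, with f finitely supported on Z^N \ {0}.\<close>
type_synonym 'k ham = "((nat \<Rightarrow> int) \<Rightarrow> 'k) \<times> (nat \<Rightarrow> 'k)"

definition Ham :: "nat \<Rightarrow> 'k::field ham set" where
  "Ham m = {(f, u). finite {r. f r \<noteq> 0} \<and> (\<forall>r. f r \<noteq> 0 \<longrightarrow> zvec (2*m) r \<and> r \<noteq> (\<lambda>_. 0))
              \<and> (\<forall>i\<ge>2*m. u i = 0)}"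

definition ham_zero :: "'k::field ham" where
  "ham_zero = ((\<lambda>_. 0), (\<lambda>_. 0))"

definition ham_add :: "'k::field ham \<Rightarrow> 'k ham \<Rightarrow> 'k ham" where
  "ham_add x y = ((\<lambda>r. fst x r + fst y r), (\<lambda>i. snd x i + snd y i))"

definition ham_smult :: "'k::field \<Rightarrow> 'k ham \<Rightarrow> 'k ham" where
  "ham_smult c x = ((\<lambda>r. c * fst x r), (\<lambda>i. c * snd x i))"

text \<open>Basis element h_r = D(bar r, r) (with h_0 = 0).\<close>
definition hvec :: "(nat \<Rightarrow> int) \<Rightarrow> 'k::field ham" where
  "hvec r = ((\<lambda>s. if s = r \<and> r \<noteq> (\<lambda>_. 0) then 1 else 0), (\<lambda>_. 0))"

text \<open>The commutator bracket:
  [h_r, h_s] = (bar r, s) h_{r+s},  [d_i, h_r] = r_i h_r,  [d_i, d_j] = 0,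
  extended bilinearly.\<close>
definition ham_bracket :: "nat \<Rightarrow> 'k::field ham \<Rightarrow> 'k ham \<Rightarrow> 'k ham" where
  "ham_bracket m x y =
     ((\<lambda>r. if r = (\<lambda>_. 0) then 0 else
            (\<Sum>s\<in>{s. fst x s \<noteq> 0}. fst x s * fst y (\<lambda>i. r i - s i)
                 * of_int (ip (2*m) (Jbar m s) (\<lambda>i. r i - s i)))
          + (\<Sum>i<2*m. snd x i * of_int (r i)) * fst y r
          - (\<Sum>i<2*m. snd y i * of_int (r i)) * fst x r),
      (\<lambda>_. 0))"

inductive_set lie_gen :: "nat \<Rightarrow> 'k::field ham set \<Rightarrow> 'k ham set" for m S where
  base: "x \<in> S \<Longrightarrow> x \<in> lie_gen m S"
| zero: "ham_zero \<in> lie_gen m S"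
| add: "x \<in> lie_gen m S \<Longrightarrow> y \<in> lie_gen m S \<Longrightarrow> ham_add x y \<in> lie_gen m S"
| smult: "x \<in> lie_gen m S \<Longrightarrow> ham_smult c x \<in> lie_gen m S"
| bracket: "x \<in> lie_gen m S \<Longrightarrow> y \<in> lie_gen m S \<Longrightarrow> ham_bracket m x y \<in> lie_gen m S"

definition Svecs :: "nat \<Rightarrow> (nat \<Rightarrow> int) set" where
  "Svecs N = {evec i | i. i < N} \<union> {(\<lambda>l. - evec i l) | i. i < N}
     \<union> {(\<lambda>l. a * evec j l + b * evec k l) | j k a b. j < k \<and> k < N \<and> a \<in> {1, -1} \<and> b \<in> {1, -1}}"

definition Sgen :: "nat \<Rightarrow> 'k::field ham set" where
  "Sgen m = hvec ` Svecs (2*m)"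

definition L_S :: "nat \<Rightarrow> 'k::field itself \<Rightarrow> (nat \<Rightarrow> int) set" where
  "L_S m _ = {r. zvec (2*m) r \<and> (hvec r :: 'k ham) \<in> lie_gen m (Sgen m)}"

end

theory Submission
  imports Defs
begin

lemma hvec_zero: "hvec (\<lambda>_. 0) = (ham_zero :: 'k::field ham)"
  by (simp add: hvec_def ham_zero_def)

lemma bracket_hvec:
  fixes s t :: "nat \<Rightarrow> int"
  assumes s0: "s \<noteq> (\<lambda>_. 0)" and t0: "t \<noteq> (\<lambda>_. 0)"
  shows "ham_bracket m (hvec s) (hvec t) = ham_smult (of_int (ip (2*m) (Jbar m s) t)) (hvec (\<lambda>i. s i + t i) :: 'k::field ham)"
proof -
  have S: "{s'. fst (hvec s :: 'k ham) s' \<noteq> 0} = {s}" using s0 by (auto simp: hvec_def)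
  have eq: "((\<lambda>i. r i - s i) = t) \<longleftrightarrow> (r = (\<lambda>i. s i + t i))" for r
    by (simp add: fun_eq_iff diff_eq_eq add_ac)
  show ?thesis
    unfolding ham_bracket_def ham_smult_def
    apply (simp only: S prod_eq_iff fst_conv snd_conv)
    apply (intro conjI ext)
     apply (simp add: hvec_def eq t0 s0)
    apply (simp add: hvec_def)
    done
qed

lemma step:
  fixes s t :: "nat \<Rightarrow> int"
  assumes "(hvec s :: 'k::field_char_0 ham) \<in> lie_gen m (Sgen m)"
    "(hvec t :: 'k ham) \<in> lie_gen m (Sgen m)" "ip (2*m) (Jbar m s) t \<noteq> 0"
  shows "(hvec (\<lambda>i. s i + t i) :: 'k ham) \<in> lie_gen m (Sgen m)"
proof -
  have s0: "s \<noteq> (\<lambda>_. 0)"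
  proof
    assume "s = (\<lambda>_. 0)"
    hence "Jbar m s = (\<lambda>_. 0)" by (auto simp: Jbar_def)
    thus False using assms(3) by (simp add: ip_def)
  qed
  have t0: "t \<noteq> (\<lambda>_. 0)" using assms(3) by (auto simp: ip_def)
  let ?c = "of_int (ip (2*m) (Jbar m s) t) :: 'k"
  have c: "?c \<noteq> 0" using assms(3) by simp
  have "ham_bracket m (hvec s) (hvec t :: 'k ham) \<in> lie_gen m (Sgen m)"
    by (rule lie_gen.bracket[OF assms(1,2)])
  hence "ham_smult (1/?c) (ham_bracket m (hvec s) (hvec t)) \<in> lie_gen m (Sgen m)"
    by (rule lie_gen.smult)
  moreover have "ham_smult (1/?c) (ham_bracket m (hvec s) (hvec t)) = (hvec (\<lambda>i. s i + t i) :: 'k ham)"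
    using bracket_hvec[OF s0 t0, where m=m, where 'k='k] c by (simp add: ham_smult_def)
  ultimately show ?thesis by simp
qed

lemma sum_split_add: fixes a b :: nat shows "(\<Sum>i<a+b. f i) = (\<Sum>i<a. f i) + (\<Sum>i<b. f (i+a))"
  by (induction b) (auto simp: add_ac)

lemma ip_self: "ip (2*m) (Jbar m t) t = 0"
proof -
  have "ip (2*m) (Jbar m t) t = (\<Sum>i<m. Jbar m t i * t i) + (\<Sum>i<m. Jbar m t (i+m) * t (i+m))"
    unfolding ip_def using sum_split_add[where a=m and b=m] by (simp add: mult_2)
  also have "\<dots> = (\<Sum>i<m. t (i+m) * t i) + (\<Sum>i<m. - t i * t (i+m))"
    by (auto simp: Jbar_def intro!: sum.cong arg_cong2[where f="(+)"])
  also have "\<dots> = 0" by (simp add: sum_negf mult.commute)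
  finally show ?thesis .
qed

lemma ip_diff1: "ip N (\<lambda>i. f i - g i) t = ip N f t - ip N g t"
  by (simp add: ip_def left_diff_distrib sum_subtractf)

lemma Jbar_diff: "Jbar m (\<lambda>i. r i - t i) = (\<lambda>i. Jbar m r i - Jbar m t i)"
  by (auto simp: Jbar_def)

lemma ip_evec: "k < N \<Longrightarrow> ip N r (evec k) = r k"
proof -
  assume k: "k < N"
  have "ip N r (evec k) = (\<Sum>i<N. if i = k then r i else 0)"
    unfolding ip_def evec_def by (rule sum.cong) auto
  also have "\<dots> = r k" using k by (simp add: sum.delta)
  finally show ?thesis .
qed

lemma ip_two: "j < N \<Longrightarrow> k < N \<Longrightarrow> ip N r (\<lambda>l. a * evec j l + b * evec k l) = a * r j + b * r k"
proof -
  assume "j < N" "k < N"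
  have "ip N r (\<lambda>l. a * evec j l + b * evec k l) = a * ip N r (evec j) + b * ip N r (evec k)"
    unfolding ip_def by (simp add: distrib_left sum.distrib sum_distrib_left algebra_simps)
  thus ?thesis using \<open>j < N\<close> \<open>k < N\<close> by (simp add: ip_evec)
qed

lemma ip_one: "j < N \<Longrightarrow> ip N r (\<lambda>l. a * evec j l) = a * r j"
proof -
  assume "j < N"
  have "ip N r (\<lambda>l. a * evec j l) = a * ip N r (evec j)"
    unfolding ip_def by (simp add: sum_distrib_left algebra_simps)
  thus ?thesis using \<open>j < N\<close> by (simp add: ip_evec)
qed

lemma om_shift: "ip (2*m) (Jbar m (\<lambda>i. r i - t i)) t = ip (2*m) (Jbar m r) t"
  by (simp add: Jbar_diff ip_diff1 ip_self)

lemma sv_one: "\<sigma> \<in> {1,-1} \<Longrightarrow> i < N \<Longrightarrow> (\<lambda>l. \<sigma> * evec i l) \<in> Svecs N"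
  unfolding Svecs_def by (auto simp: fun_eq_iff)

lemma sv_two:
  assumes "j \<noteq> k" "j < N" "k < N" "a \<in> {1,-1}" "b \<in> {1,-1}"
  shows "(\<lambda>l. a * evec j l + b * evec k l) \<in> Svecs N"
proof (cases "j < k")
  case True
  then show ?thesis using assms unfolding Svecs_def by blast
next
  case False
  hence "k < j" using assms(1) by simp
  moreover have "(\<lambda>l. a * evec j l + b * evec k l) = (\<lambda>l. b * evec k l + a * evec j l)"
    by (simp add: add.commute)
  ultimately show ?thesis using assms unfolding Svecs_def by blast
qed

lemma sv_zvec: "t \<in> Svecs N \<Longrightarrow> zvec N t"
  unfolding Svecs_def zvec_def by (auto simp: evec_def)

lemma sv_gen: "t \<in> Svecs (2*m) \<Longrightarrow> (hvec t :: 'k::field ham) \<in> lie_gen m (Sgen m)"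
  by (rule lie_gen.base) (simp add: Sgen_def)

definition nr :: "nat \<Rightarrow> (nat \<Rightarrow> int) \<Rightarrow> nat" where
  "nr N r = (\<Sum>i<N. nat \<bar>r i\<bar>)"

definition fullset :: "nat \<Rightarrow> (nat \<Rightarrow> int) \<Rightarrow> nat set" where
  "fullset m r = {p. p < m \<and> r p \<noteq> 0 \<and> r (p+m) \<noteq> 0}"

definition mu :: "nat \<Rightarrow> (nat \<Rightarrow> int) \<Rightarrow> nat" where
  "mu m r = 2 * nr (2*m) r + (m - card (fullset m r))"

lemma fullset_le: "card (fullset m r) \<le> m"
proof -
  have "fullset m r \<subseteq> {..<m}" by (auto simp: fullset_def)
  from card_mono[OF _ this] show ?thesis by simp
qed

lemma fullset_fin: "finite (fullset m r)"
  by (rule finite_subset[of _ "{..<m}"]) (auto simp: fullset_def)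

lemma nr_point:
  assumes "j < N" "\<And>i. i \<noteq> j \<Longrightarrow> s i = r i"
  shows "nr N s + nat \<bar>r j\<bar> = nr N r + nat \<bar>s j\<bar>"
proof -
  have j: "j \<in> {..<N}" using assms(1) by simp
  have "nr N s = nat \<bar>s j\<bar> + (\<Sum>i\<in>{..<N}-{j}. nat \<bar>s i\<bar>)"
    unfolding nr_def using sum.remove[OF _ j] by simp
  moreover have "nr N r = nat \<bar>r j\<bar> + (\<Sum>i\<in>{..<N}-{j}. nat \<bar>r i\<bar>)"
    unfolding nr_def using sum.remove[OF _ j] by simp
  moreover have "(\<Sum>i\<in>{..<N}-{j}. nat \<bar>s i\<bar>) = (\<Sum>i\<in>{..<N}-{j}. nat \<bar>r i\<bar>)"
    using assms(2) by (intro sum.cong) auto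
  ultimately show ?thesis by simp
qed

lemma sgn_step: "(x::int) \<noteq> 0 \<Longrightarrow> nat \<bar>x\<bar> = nat \<bar>x - sgn x\<bar> + 1"
  by (cases "x > 0") (auto simp: sgn_if)

lemma sgn_pm: "(x::int) \<noteq> 0 \<Longrightarrow> sgn x \<in> {1,-1}"
  by (auto simp: sgn_if)

lemma via:
  fixes r t :: "nat \<Rightarrow> int"
  assumes "t \<in> Svecs (2*m)" "zvec (2*m) r"
    "(hvec (\<lambda>i. r i - t i) :: 'k::field_char_0 ham) \<in> lie_gen m (Sgen m)"
    "ip (2*m) (Jbar m r) t \<noteq> 0"
  shows "(hvec r :: 'k ham) \<in> lie_gen m (Sgen m)"
proof -
  have "(hvec (\<lambda>i. (r i - t i) + t i) :: 'k ham) \<in> lie_gen m (Sgen m)"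
    by (rule step[OF assms(3) sv_gen[OF assms(1)]]) (use assms(4) om_shift in simp)
  thus ?thesis by simp
qed

lemma caseA:
  fixes r :: "nat \<Rightarrow> int"
  assumes zr: "zvec (2*m) r" and p: "p < m" "r p \<noteq> 0" "r (p+m) \<noteq> 0"
  defines "t \<equiv> (\<lambda>l. sgn (r p) * evec p l)"
  shows "t \<in> Svecs (2*m)" "ip (2*m) (Jbar m r) t \<noteq> 0" "zvec (2*m) (\<lambda>i. r i - t i)"
    "mu m (\<lambda>i. r i - t i) < mu m r"
proof -
  show t: "t \<in> Svecs (2*m)" unfolding t_def using p by (intro sv_one sgn_pm) auto
  show "ip (2*m) (Jbar m r) t \<noteq> 0" unfolding t_def using p
    by (subst ip_one) (auto simp: Jbar_def sgn_if)
  show "zvec (2*m) (\<lambda>i. r i - t i)" using zr sv_zvec[OF t] by (simp add: zvec_def)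
  define s where "s = (\<lambda>i. r i - t i)"
  have sp: "s p = r p - sgn (r p)" by (simp add: s_def t_def evec_def)
  have so: "s i = r i" if "i \<noteq> p" for i using that by (simp add: s_def t_def evec_def)
  have "nr (2*m) s + nat \<bar>r p\<bar> = nr (2*m) r + nat \<bar>s p\<bar>"
    by (rule nr_point) (use p so in auto)
  with sgn_step[OF p(2)] sp have nr: "nr (2*m) s + 1 = nr (2*m) r" by simp
  have sub: "fullset m r - {p} \<subseteq> fullset m s"
    using so p by (auto simp: fullset_def)
  have "card (fullset m r) \<le> card (fullset m r - {p}) + 1"
  proof (cases "p \<in> fullset m r")
    case True
    have "card (fullset m r) > 0" using True fullset_fin card_gt_0_iff by blast
    thus ?thesis using True by (simp add: card_Diff_singleton fullset_fin)
  next
    case False thus ?thesis by simp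
  qed
  also have "\<dots> \<le> card (fullset m s) + 1" using card_mono[OF fullset_fin sub] by simp
  finally have "card (fullset m r) \<le> card (fullset m s) + 1" .
  with nr fullset_le[of m s] fullset_le[of m r]
  show "mu m (\<lambda>i. r i - t i) < mu m r" unfolding mu_def s_def[symmetric] by linarith
qed

lemma caseB:
  fixes r :: "nat \<Rightarrow> int"
  assumes zr: "zvec (2*m) r" and nf: "\<forall>p<m. r p = 0 \<or> r (p+m) = 0"
    and j: "j < 2*m" "r j \<noteq> 0" and k: "k \<noteq> j \<or> 2 \<le> \<bar>r j\<bar>" "r k \<noteq> 0"
  defines "kk \<equiv> (if k < m then k+m else k-m)"
  defines "t \<equiv> (\<lambda>l. sgn (r j) * evec j l + 1 * evec kk l)"
  shows "t \<in> Svecs (2*m)" "ip (2*m) (Jbar m r) t \<noteq> 0" "zvec (2*m) (\<lambda>i. r i - t i)"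
    "mu m (\<lambda>i. r i - t i) < mu m r"
proof -
  have k2: "k < 2*m" using zr k(2) by (auto simp: zvec_def not_less[symmetric])
  have kk2: "kk < 2*m" using k2 by (auto simp: kk_def)
  have rkk: "r kk = 0" using nf[rule_format, of k] nf[rule_format, of "k-m"] k2 k(2)
    by (cases "k<m") (auto simp: kk_def)
  have jkk: "j \<noteq> kk" using rkk j(2) by auto
  have kkk: "k \<noteq> kk" using k2 by (cases "k<m") (auto simp: kk_def)
  have Jj: "Jbar m r j = 0" using nf[rule_format, of j] nf[rule_format, of "j-m"] j
    by (cases "j<m") (auto simp: Jbar_def)
  have Jkk: "Jbar m r kk \<noteq> 0" using k2 k(2)
    by (cases "k<m") (auto simp: Jbar_def kk_def)
  show t: "t \<in> Svecs (2*m)" unfolding t_def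
    by (rule sv_two[OF jkk j(1) kk2]) (use sgn_pm[OF j(2)] in auto)
  show "ip (2*m) (Jbar m r) t \<noteq> 0" unfolding t_def
    using Jj Jkk by (subst ip_two[OF j(1) kk2]) simp
  show "zvec (2*m) (\<lambda>i. r i - t i)" using zr sv_zvec[OF t] by (simp add: zvec_def)
  define s where "s = (\<lambda>i. r i - t i)"
  have sj: "s j = r j - sgn (r j)" using jkk by (simp add: s_def t_def evec_def)
  have skk: "s kk = -1" using jkk rkk by (simp add: s_def t_def evec_def)
  have so: "s i = r i" if "i \<noteq> j" "i \<noteq> kk" for i using that by (simp add: s_def t_def evec_def)
  define u where "u = r(j := s j)"
  have "nr (2*m) u + nat \<bar>r j\<bar> = nr (2*m) r + nat \<bar>u j\<bar>"
    by (rule nr_point) (use j in \<open>auto simp: u_def\<close>)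
  moreover have "nr (2*m) s + nat \<bar>u kk\<bar> = nr (2*m) u + nat \<bar>s kk\<bar>"
    by (rule nr_point[OF kk2]) (use so in \<open>auto simp: u_def\<close>)
  moreover have "u kk = 0" "u j = s j" using rkk jkk by (auto simp: u_def)
  ultimately have nr: "nr (2*m) s = nr (2*m) r" using sgn_step[OF j(2)] sj skk by simp
  define q where "q = (if k < m then k else k-m)"
  have sk: "s k \<noteq> 0"
  proof (cases "k = j")
    case True thus ?thesis using sj k(1) by (auto simp: sgn_if)
  next
    case False thus ?thesis using so[of k] kkk k(2) by simp
  qed
  have "q \<in> fullset m s" using k2 sk skk
    by (cases "k<m") (auto simp: fullset_def q_def kk_def)
  hence "card (fullset m s) > 0" using fullset_fin card_gt_0_iff by blast
  moreover have "fullset m r = {}" using nf by (auto simp: fullset_def)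
  ultimately show "mu m (\<lambda>i. r i - t i) < mu m r"
    using nr fullset_le[of m s] unfolding mu_def s_def[symmetric] by simp
qed

lemma main_ind:
  "\<forall>r. zvec (2*m) r \<longrightarrow> mu m r = n \<longrightarrow> (hvec r :: 'k::field_char_0 ham) \<in> lie_gen m (Sgen m)"
proof (induction n rule: less_induct)
  case (less n)
  show ?case
  proof (intro allI impI)
    fix r :: "nat \<Rightarrow> int"
    assume zr: "zvec (2*m) r" and mr: "mu m r = n"
    have IH: "(hvec s :: 'k ham) \<in> lie_gen m (Sgen m)"
      if "zvec (2*m) s" "mu m s < mu m r" for s using less that mr by blast
    show "(hvec r :: 'k ham) \<in> lie_gen m (Sgen m)"
    proof (cases "r = (\<lambda>_. 0)")
      case True thus ?thesis by (simp add: hvec_zero lie_gen.zero)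
    next
      case nz: False
      show ?thesis
      proof (cases "\<exists>p<m. r p \<noteq> 0 \<and> r (p+m) \<noteq> 0")
        case True
        then obtain p where p: "p < m" "r p \<noteq> 0" "r (p+m) \<noteq> 0" by blast
        note A = caseA[OF zr p]
        show ?thesis by (rule via[OF A(1) zr IH[OF A(3,4)] A(2)])
      next
        case nf0: False
        hence nf: "\<forall>p<m. r p = 0 \<or> r (p+m) = 0" by blast
        obtain j where rj: "r j \<noteq> 0" using nz by auto
        have j: "j < 2*m" using zr rj by (auto simp: zvec_def not_less[symmetric])
        show ?thesis
        proof (cases "\<exists>k. (k \<noteq> j \<or> 2 \<le> \<bar>r j\<bar>) \<and> r k \<noteq> 0")
          case True
          then obtain k where k: "k \<noteq> j \<or> 2 \<le> \<bar>r j\<bar>" "r k \<noteq> 0" by blast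
          note B = caseB[OF zr nf j rj k]
          show ?thesis by (rule via[OF B(1) zr IH[OF B(3,4)] B(2)])
        next
          case False
          hence "r = (\<lambda>l. r j * evec j l)" "r j \<in> {1,-1}"
            using rj by (auto simp: fun_eq_iff evec_def)
          thus ?thesis using sv_gen sv_one j by metis
        qed
      qed
    qed
  qed
qed

theorem proposition2p3:
  fixes m :: nat
  assumes "m \<ge> 1"
    and "\<forall>p :: 'k::field_char_0 poly. degree p > 0 \<longrightarrow> (\<exists>x. poly p x = 0)"
  shows "L_S m TYPE('k) = {r. zvec (2*m) r}"
  unfolding L_S_def using main_ind[where 'k='k] by blast

end
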